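(* Let $w$ be a word over $\{L,R\}$ and let $u\in\mathcal{L}_w$. Then $u$ is derivable from $w$, i.e. $u$ is a tail of a word obtained from $w$ by finitely many applications of the reduction rules (1), (1'), (2), (2').
   Context: Words are finite strings (including the empty word) over $\{L,R\}$; $|w|$ is the length. A tail of $w$ is any word $v'$ with $w=vv'$ for some word $v$. A word $u$ is derivable from $w$ if it is obtained from $w$ by finitely many successive applications (in any order) of the following rules, where $v,v'$ denote arbitrary words: (1) $vRRv'\Rightarrow vRv'$; (1') $vLLv'\Rightarrow vLv'$; (2) $vLRv'\Rightarrow vv'$; (2') $vRLv'\Rightarrow vv'$ (rules of reduction); (3) $vv'\Rightarrow v'$ (tail formation). For a set $\mathcal{S}$ of words, $\mathcal{S}^L$ (resp. $\mathcal{S}^R$) is the set of words in $\mathcal{S}$ starting with $L$ (resp. $R$), and $L(\mathcal{S})=\{Ls: s\in\mathcal{S}\}$, $R(\mathcal{S})=\{Rs:s\in\mathcal{S}\}$. The language $\mathcal{L}_w$ is defined recursively: if $|w|\le 2$, $\mathcal{L}_w$ is the set of tails of $w$; if $|w|>2$, then $\mathcal{L}_w=\mathcal{L}_{Rw'}\cup L(\mathcal{L}^R_{Rw'})$ when $w=LRw'$; $\mathcal{L}_w=\mathcal{L}_{LLw'}\cup L(\mathcal{L}^L_{LLw'})$ when $w=LLLw'$; $\mathcal{L}_w=\mathcal{L}_{LRw'}\cup L(\mathcal{L}_{LRw'})$ when $w=LLRw'$; and dually (interchanging the letters $L$ and $R$ everywhere) when $w$ starts with $R$. *)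

theory Defs
  imports Main
begin

datatype letter = L | R

type_synonym word = "letter list"

definition tails :: "word \<Rightarrow> word set" where
  "tails w = {v'. \<exists>v. w = v @ v'}"

inductive reduce_step :: "word \<Rightarrow> word \<Rightarrow> bool" where
  r1:  "reduce_step (v @ [R, R] @ v') (v @ [R] @ v')"
| r1': "reduce_step (v @ [L, L] @ v') (v @ [L] @ v')"
| r2:  "reduce_step (v @ [L, R] @ v') (v @ v')"
| r2': "reduce_step (v @ [R, L] @ v') (v @ v')"

inductive deriv_step :: "word \<Rightarrow> word \<Rightarrow> bool" where
  red:  "reduce_step w u \<Longrightarrow> deriv_step w u"
| tail: "deriv_step (v @ v') v'"

definition derivable :: "word \<Rightarrow> word \<Rightarrow> bool" where
  "derivable w u \<longleftrightarrow> deriv_step\<^sup>*\<^sup>* w u"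

definition startL :: "word set \<Rightarrow> word set" where
  "startL S = {s \<in> S. \<exists>t. s = L # t}"

definition startR :: "word set \<Rightarrow> word set" where
  "startR S = {s \<in> S. \<exists>t. s = R # t}"

definition prefL :: "word set \<Rightarrow> word set" where
  "prefL S = (\<lambda>s. L # s) ` S"

definition prefR :: "word set \<Rightarrow> word set" where
  "prefR S = (\<lambda>s. R # s) ` S"

function lang :: "word \<Rightarrow> word set" where
  "length w \<le> 2 \<Longrightarrow> lang w = tails w"
| "w' \<noteq> [] \<Longrightarrow> lang (L # R # w') = lang (R # w') \<union> prefL (startR (lang (R # w')))"
| "lang (L # L # L # w') = lang (L # L # w') \<union> prefL (startL (lang (L # L # w')))"
| "lang (L # L # R # w') = lang (L # R # w') \<union> prefL (lang (L # R # w'))"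
| "w' \<noteq> [] \<Longrightarrow> lang (R # L # w') = lang (L # w') \<union> prefR (startL (lang (L # w')))"
| "lang (R # R # R # w') = lang (R # R # w') \<union> prefR (startR (lang (R # R # w')))"
| "lang (R # R # L # w') = lang (R # L # w') \<union> prefR (lang (R # L # w'))"
proof -
  fix P and x :: word
  assume a1: "\<And>w. length w \<le> 2 \<Longrightarrow> x = w \<Longrightarrow> P"
    and a2: "\<And>w'. w' \<noteq> [] \<Longrightarrow> x = L # R # w' \<Longrightarrow> P"
    and a3: "\<And>w'. x = L # L # L # w' \<Longrightarrow> P"
    and a4: "\<And>w'. x = L # L # R # w' \<Longrightarrow> P"
    and a5: "\<And>w'. w' \<noteq> [] \<Longrightarrow> x = R # L # w' \<Longrightarrow> P"
    and a6: "\<And>w'. x = R # R # R # w' \<Longrightarrow> P"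
    and a7: "\<And>w'. x = R # R # L # w' \<Longrightarrow> P"
  show P
  proof (cases "length x \<le> 2")
    case True then show ?thesis using a1 by blast
  next
    case False
    then obtain a b c w' where x: "x = a # b # c # w'"
      by (metis Suc_le_length_iff numeral_2_eq_2 not_less_eq_eq)
    show ?thesis
      using a2[of "c # w'"] a3[of w'] a4[of w'] a5[of "c # w'"] a6[of w'] a7[of w'] x
      by (cases a; cases b; cases c; cases w') auto
  qed
qed auto
termination by (relation "measure length") auto

end

theory Submission
  imports Defs
begin

lemma rs_ctx: "reduce_step x x' \<Longrightarrow> reduce_step (p @ x @ q) (p @ x' @ q)"
proof (induction rule: reduce_step.induct)
  case (r1 v v') then show ?case using reduce_step.r1[of "p @ v" "v' @ q"] by simp
next
  case (r1' v v') then show ?case using reduce_step.r1'[of "p @ v" "v' @ q"] by simp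
next
  case (r2 v v') then show ?case using reduce_step.r2[of "p @ v" "v' @ q"] by simp
next
  case (r2' v v') then show ?case using reduce_step.r2'[of "p @ v" "v' @ q"] by simp
qed

lemma rss_ctx: "reduce_step\<^sup>*\<^sup>* x x' \<Longrightarrow> reduce_step\<^sup>*\<^sup>* (p @ x @ q) (p @ x' @ q)"
proof (induction rule: rtranclp_induct)
  case base then show ?case by simp
next
  case (step y z) then show ?case using rs_ctx[of y z p q] by (meson rtranclp.rtrancl_into_rtrancl)
qed

lemma rs_front: "reduce_step (x # y # r) s \<Longrightarrow> reduce_step (p @ x # y # r) (p @ s)"
  using rs_ctx[of "x # y # r" s p "[]"] by simp

lemma dup: "reduce_step (a # a # t) (a # t)"
  using reduce_step.r1[of "[]" t] reduce_step.r1'[of "[]" t] by (cases a) auto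

lemma red_short: "\<exists>c. length c \<le> 1 \<and> reduce_step\<^sup>*\<^sup>* y c"
proof (induction "length y" arbitrary: y rule: less_induct)
  case less
  show ?case
  proof (cases y)
    case Nil then show ?thesis by (intro exI[of _ "[]"]) auto
  next
    case (Cons p r)
    show ?thesis
    proof (cases r)
      case Nil
      have "length [p] \<le> 1" by simp
      then show ?thesis using Cons Nil \<open>y = p # r\<close> by blast
    next
      case (Cons q r')
      have "\<exists>s. length s < length y \<and> reduce_step y s"
      proof (cases p; cases q)
        assume "p = L" "q = L"
        then show ?thesis using reduce_step.r1'[of "[]" r'] Cons \<open>y = p # r\<close> by (auto intro!: exI[where x="L # r'"])
      next
        assume "p = L" "q = R"
        then show ?thesis using reduce_step.r2[of "[]" r'] Cons \<open>y = p # r\<close> by (auto intro!: exI[where x="r'"])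
      next
        assume "p = R" "q = L"
        then show ?thesis using reduce_step.r2'[of "[]" r'] Cons \<open>y = p # r\<close> by (auto intro!: exI[where x="r'"])
      next
        assume "p = R" "q = R"
        then show ?thesis using reduce_step.r1[of "[]" r'] Cons \<open>y = p # r\<close> by (auto intro!: exI[where x="R # r'"])
      qed
      then obtain s where "length s < length y" "reduce_step y s" by blast
      with less obtain c where "length c \<le> 1" "reduce_step\<^sup>*\<^sup>* s c" by blast
      then show ?thesis using \<open>reduce_step y s\<close> by (meson converse_rtranclp_into_rtranclp)
    qed
  qed
qed

lemma red_der: "reduce_step\<^sup>*\<^sup>* x y \<Longrightarrow> derivable x y"
  unfolding derivable_def
  by (induction rule: rtranclp_induct) (auto intro: deriv_step.red rtranclp.rtrancl_into_rtrancl)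

lemma der_nf: "derivable w u \<Longrightarrow> \<exists>y. reduce_step\<^sup>*\<^sup>* w (y @ u)"
  unfolding derivable_def
proof (induction rule: rtranclp_induct)
  case base then show ?case by (rule exI[of _ "[]"]) simp
next
  case (step u u')
  then obtain y where y: "reduce_step\<^sup>*\<^sup>* w (y @ u)" by blast
  from step(2) show ?case
  proof cases
    case red
    then have "reduce_step (y @ u) (y @ u')" using rs_ctx[of u u' y "[]"] by simp
    then show ?thesis using y by (meson rtranclp.rtrancl_into_rtrancl)
  next
    case (tail v)
    then show ?thesis using y by (intro exI[of _ "y @ v"]) simp
  qed
qed

lemma der_trans: "derivable a b \<Longrightarrow> derivable b c \<Longrightarrow> derivable a c"
  unfolding derivable_def by auto

lemma der_tail: "derivable (v @ v') v'"
  unfolding derivable_def by (auto intro: deriv_step.tail)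

lemma lemC: assumes "derivable w (a # t)" and ab: "a \<noteq> b" shows "derivable (b # w) (b # a # t)"
proof -
  obtain y where y: "reduce_step\<^sup>*\<^sup>* w (y @ a # t)" using der_nf[OF assms(1)] by blast
  obtain c where c: "length c \<le> 1" "reduce_step\<^sup>*\<^sup>* y c" using red_short by blast
  have 1: "reduce_step\<^sup>*\<^sup>* (b # w) (b # y @ a # t)" using rss_ctx[OF y, of "[b]" "[]"] by simp
  have 2: "reduce_step\<^sup>*\<^sup>* (b # y @ a # t) (b # c @ a # t)" using rss_ctx[OF c(2), of "[b]" "a # t"] by simp
  have 3: "reduce_step\<^sup>*\<^sup>* (b # c @ a # t) (b # a # t)"
  proof (cases c)
    case Nil then show ?thesis by simp
  next
    case (Cons x c')
    then have c': "c' = []" using c(1) by simp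
    have "reduce_step (b # x # a # t) (b # a # t)"
    proof (cases "x = b")
      case True
      then show ?thesis
        by (cases b) (auto intro: reduce_step.r1[of "[]" "a # t", simplified] reduce_step.r1'[of "[]" "a # t", simplified])
    next
      case False
      then have "x = a \<or> b = a" by (cases x; cases a; cases b) auto
      then show ?thesis
      proof
        assume "x = a" then show ?thesis
          by (cases a) (auto intro: reduce_step.r1[of "[b]" t, simplified] reduce_step.r1'[of "[b]" t, simplified])
      next
        assume "b = a" then show ?thesis using ab by simp
      qed
    qed
    then show ?thesis using Cons c' by auto
  qed
  show ?thesis using 1 2 3 red_der by (meson rtranclp_trans)
qed

lemma LLR_L: "derivable (L # L # R # w) [L]"
proof -
  obtain c where c: "length c \<le> 1" "reduce_step\<^sup>*\<^sup>* w c" using red_short by blast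
  have 1: "reduce_step\<^sup>*\<^sup>* (L # L # R # w) (L # L # R # c)" using rss_ctx[OF c(2), of "[L,L,R]" "[]"] by simp
  have "reduce_step\<^sup>*\<^sup>* (L # L # R # c) [L]"
  proof (cases c)
    case Nil
    have "reduce_step [L, L, R] [L]" using reduce_step.r2[of "[L]" "[]"] by simp
    then show ?thesis using Nil by auto
  next
    case (Cons x c')
    then have c': "c' = []" using c(1) by simp
    show ?thesis
    proof (cases x)
      case L
      have a: "reduce_step [L, L, R, L] [L, L]" using reduce_step.r2'[of "[L,L]" "[]"] by simp
      have b: "reduce_step [L, L] [L]" using reduce_step.r1'[of "[]" "[]"] by simp
      show ?thesis using a b Cons c' L by (meson converse_rtranclp_into_rtranclp r_into_rtranclp)
    next
      case R
      have a: "reduce_step [L, L, R, R] [L, L, R]" using reduce_step.r1[of "[L,L]" "[]"] by simp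
      have b: "reduce_step [L, L, R] [L]" using reduce_step.r2[of "[L]" "[]"] by simp
      show ?thesis using a b Cons c' R by (meson converse_rtranclp_into_rtranclp r_into_rtranclp)
    qed
  qed
  then show ?thesis using 1 red_der by (meson rtranclp_trans)
qed

lemma RRL_R: "derivable (R # R # L # w) [R]"
proof -
  obtain c where c: "length c \<le> 1" "reduce_step\<^sup>*\<^sup>* w c" using red_short by blast
  have 1: "reduce_step\<^sup>*\<^sup>* (R # R # L # w) (R # R # L # c)" using rss_ctx[OF c(2), of "[R,R,L]" "[]"] by simp
  have "reduce_step\<^sup>*\<^sup>* (R # R # L # c) [R]"
  proof (cases c)
    case Nil
    have "reduce_step [R, R, L] [R]" using reduce_step.r2'[of "[R]" "[]"] by simp
    then show ?thesis using Nil by auto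
  next
    case (Cons x c')
    then have c': "c' = []" using c(1) by simp
    show ?thesis
    proof (cases x)
      case R
      have a: "reduce_step [R, R, L, R] [R, R]" using reduce_step.r2[of "[R,R]" "[]"] by simp
      have b: "reduce_step [R, R] [R]" using reduce_step.r1[of "[]" "[]"] by simp
      show ?thesis using a b Cons c' R by (meson converse_rtranclp_into_rtranclp r_into_rtranclp)
    next
      case L
      have a: "reduce_step [R, R, L, L] [R, R, L]" using reduce_step.r1'[of "[R,R]" "[]"] by simp
      have b: "reduce_step [R, R, L] [R]" using reduce_step.r2'[of "[R]" "[]"] by simp
      show ?thesis using a b Cons c' L by (meson converse_rtranclp_into_rtranclp r_into_rtranclp)
    qed
  qed
  then show ?thesis using 1 red_der by (meson rtranclp_trans)
qed

lemma der_cons: "derivable (a # w) w"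
  using der_tail[of "[a]" w] by simp


lemma helper:
  assumes r: "reduce_step [c,d] e" and eq: "s @ e @ s' = q @ y''" and le: "length e \<le> 1"
  shows "\<exists>q' x''. s @ [c,d] @ s' = q' @ x'' \<and> reduce_step\<^sup>*\<^sup>* x'' y''"
proof -
  from eq obtain us where
    "(s = q @ us \<and> us @ e @ s' = y'') \<or> (s @ us = q \<and> e @ s' = us @ y'')"
    by (auto simp: append_eq_append_conv2)
  then show ?thesis
  proof
    assume h: "s = q @ us \<and> us @ e @ s' = y''"
    have "reduce_step (us @ [c,d] @ s') (us @ e @ s')" using rs_ctx[OF r, of us s'] by simp
    then show ?thesis using h by (intro exI[of _ q] exI[of _ "us @ [c,d] @ s'"]) auto
  next
    assume h: "s @ us = q \<and> e @ s' = us @ y''"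
    then obtain us2 where h2: "(e = us @ us2 \<and> us2 @ s' = y'') \<or> (e @ us2 = us \<and> s' = us2 @ y'')"
      by (auto simp: append_eq_append_conv2)
    then show ?thesis
    proof
      assume h3: "e = us @ us2 \<and> us2 @ s' = y''"
      show ?thesis
      proof (cases us2)
        case Nil then show ?thesis using h3 by (intro exI[of _ "s @ [c,d]"] exI[of _ s']) auto
      next
        case (Cons z zs)
        then have "us = []" "zs = []" using h3 le by auto
        then have "y'' = e @ s'" using h3 Cons by simp
        moreover have "reduce_step ([c,d] @ s') (e @ s')" using rs_ctx[OF r, of "[]" s'] by simp
        ultimately show ?thesis by (intro exI[of _ s] exI[of _ "[c,d] @ s'"]) auto
      qed
    next
      assume h3: "e @ us2 = us \<and> s' = us2 @ y''"
      then show ?thesis by (intro exI[of _ "s @ [c,d] @ us2"] exI[of _ y'']) auto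
    qed
  qed
qed

lemma K_step: "reduce_step x y \<Longrightarrow> y = q @ y'' \<Longrightarrow> \<exists>q' x''. x = q' @ x'' \<and> reduce_step\<^sup>*\<^sup>* x'' y''"
proof (induction rule: reduce_step.induct)
  case (r1 v v') then show ?case using helper[OF reduce_step.r1[of "[]" "[]", simplified], of v v' q y''] by simp
next
  case (r1' v v') then show ?case using helper[OF reduce_step.r1'[of "[]" "[]", simplified], of v v' q y''] by simp
next
  case (r2 v v') then show ?case using helper[OF reduce_step.r2[of "[]" "[]", simplified], of v v' q y''] by simp
next
  case (r2' v v') then show ?case using helper[OF reduce_step.r2'[of "[]" "[]", simplified], of v v' q y''] by simp
qed

lemma K: "reduce_step\<^sup>*\<^sup>* x z \<Longrightarrow> z = q @ y'' \<Longrightarrow> \<exists>q' x''. x = q' @ x'' \<and> reduce_step\<^sup>*\<^sup>* x'' y''"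
proof (induction arbitrary: q y'' rule: converse_rtranclp_induct)
  case base then show ?case by blast
next
  case (step x y)
  then obtain q1 y1 where "y = q1 @ y1" "reduce_step\<^sup>*\<^sup>* y1 y''" by blast
  with K_step[OF step(1)] obtain q' x'' where "x = q' @ x''" "reduce_step\<^sup>*\<^sup>* x'' y1" by blast
  then show ?case using \<open>reduce_step\<^sup>*\<^sup>* y1 y''\<close> rtranclp_trans[of reduce_step x'' y1 y''] by blast
qed

lemma nf2: "derivable x u \<Longrightarrow> \<exists>p x'. x = p @ x' \<and> reduce_step\<^sup>*\<^sup>* x' u"
  unfolding derivable_def
proof (induction rule: rtranclp_induct)
  case base then show ?case by (metis append_Nil rtranclp.rtrancl_refl)
next
  case (step u u')
  then obtain p x' where px: "x = p @ x'" "reduce_step\<^sup>*\<^sup>* x' u" by blast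
  from step(2) show ?case
  proof cases
    case red then show ?thesis using px rtranclp.rtrancl_into_rtrancl[of reduce_step x' u u'] by blast
  next
    case (tail v)
    then obtain q' x'' where "x' = q' @ x''" "reduce_step\<^sup>*\<^sup>* x'' u'" using K[OF px(2)] by blast
    then show ?thesis using px by (intro exI[of _ "p @ q'"] exI[of _ x'']) auto
  qed
qed

lemma H1: assumes "derivable (a # w) (a # t)" shows "derivable (a # a # w) (a # a # t)"
proof -
  obtain p x' where px: "a # w = p @ x'" "reduce_step\<^sup>*\<^sup>* x' (a # t)" using nf2[OF assms] by blast
  show ?thesis
  proof (cases p)
    case Nil
    then show ?thesis using rss_ctx[OF px(2), of "[a]" "[]"] px red_der by simp
  next
    case (Cons p0 p')
    then have w: "w = p' @ x'" using px by simp
    obtain c where c: "length c \<le> 1" "reduce_step\<^sup>*\<^sup>* p' c" using red_short by blast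
    have 1: "reduce_step\<^sup>*\<^sup>* (a # a # w) (a # a # c @ x')" using rss_ctx[OF c(2), of "[a,a]" x'] w by simp
    have 2: "reduce_step\<^sup>*\<^sup>* (a # a # c @ x') (a # a # c @ a # t)" using rss_ctx[OF px(2), of "a # a # c" "[]"] by simp
    have 3: "reduce_step\<^sup>*\<^sup>* (a # c @ a # t) (a # t)"
    proof (cases c)
      case Nil
      have "reduce_step (a # a # t) (a # t)"
        by (cases a) (auto intro: reduce_step.r1[of "[]" t, simplified] reduce_step.r1'[of "[]" t, simplified])
      then show ?thesis using Nil by auto
    next
      case (Cons x c')
      then have c': "c' = []" using c(1) by simp
      show ?thesis
      proof (cases "x = a")
        case True
        have s1: "reduce_step (a # a # a # t) (a # a # t)" by (rule dup)
        have s2: "reduce_step (a # a # t) (a # t)"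
          by (cases a) (auto intro: reduce_step.r1[of "[]" t, simplified] reduce_step.r1'[of "[]" t, simplified])
        have "reduce_step\<^sup>*\<^sup>* (a # a # a # t) (a # t)" using s1 s2 by (meson converse_rtranclp_into_rtranclp r_into_rtranclp)
        then show ?thesis using Cons c' True by simp
      next
        case False
        have "reduce_step (a # x # a # t) (a # t)" using False
          by (cases a; cases x) (auto intro: reduce_step.r2[of "[R]" t, simplified] reduce_step.r2'[of "[L]" t, simplified])
        then show ?thesis using Cons c' by auto
      qed
    qed
    have 4: "reduce_step\<^sup>*\<^sup>* (a # a # c @ a # t) (a # a # t)" using rss_ctx[OF 3, of "[a]" "[]"] by simp
    show ?thesis using 1 2 4 red_der by (meson rtranclp_trans)
  qed
qed

lemma pc: "derivable (b # w0) s \<Longrightarrow> s \<noteq> [] \<Longrightarrow> derivable (b # b # w0) (b # s)"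
proof (cases s)
  case (Cons a t)
  assume d: "derivable (b # w0) s"
  show ?thesis
  proof (cases "a = b")
    case True then show ?thesis using H1 d Cons by simp
  next
    case False then show ?thesis using lemC d Cons by simp
  qed
qed simp

theorem mainTheorem9:
  fixes w u :: word
  assumes "u \<in> lang w"
  shows "derivable w u"
  using assms
proof (induction w arbitrary: u rule: lang.induct)
  case (1 w)
  then show ?case by (auto simp: tails_def intro: der_tail)
next
  case (2 w')
  then show ?case using der_trans[OF der_cons] lemC[of "R # w'" R _ L]
    by (auto simp: prefL_def startR_def)
next
  case (3 w')
  then show ?case using der_trans[OF der_cons] pc[of L "L # w'"]
    by (auto simp: prefL_def startL_def)
next
  case (4 w')
  then show ?case using der_trans[OF der_cons] pc[of L "R # w'"] LLR_L
    by (auto simp: prefL_def) (metis)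
next
  case (5 w')
  then show ?case using der_trans[OF der_cons] lemC[of "L # w'" L _ R]
    by (auto simp: prefR_def startL_def)
next
  case (6 w')
  then show ?case using der_trans[OF der_cons] pc[of R "R # w'"]
    by (auto simp: prefR_def startR_def)
next
  case (7 w')
  then show ?case using der_trans[OF der_cons] pc[of R "L # w'"] RRL_R
    by (auto simp: prefR_def) (metis)
qed

end
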